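(* Define, for $x\ge 0$, $$f(x):=\frac12\,\mathrm{Erfc}\Big(-\frac{x}{2\sqrt2}\Big)+\frac12\,e^{3x^2}\,\mathrm{Erfc}\Big(\frac{5x}{2\sqrt2}\Big).$$ Then for all $x\ge 0$, $$f(x)\ge N\Big(\frac1{\sqrt5}\Big)+\frac1{12}\sqrt{\frac{10}{\pi}}\,e^{-1/10}\ (\approx 0.8072).$$
   Context: $\mathrm{Erfc}(x):=\frac{2}{\sqrt\pi}\int_x^\infty e^{-v^2}dv$ for $x\in\mathbb{R}$, and $N(x):=\frac1{\sqrt{2\pi}}\int_{-\infty}^x e^{-v^2/2}dv$ is the standard normal distribution function. *)

theory Defs
  imports "HOL-Analysis.Analysis"
begin

definition Erfc :: "real \<Rightarrow> real" where
  "Erfc x = 2 / sqrt pi * (LBINT v:{x..}. exp (- (v\<^sup>2)))"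

definition N :: "real \<Rightarrow> real" where
  "N x = 1 / sqrt (2 * pi) * (LBINT v:{..x}. exp (- (v\<^sup>2) / 2))"

definition f :: "real \<Rightarrow> real" where
  "f x = 1/2 * Erfc (- x / (2 * sqrt 2)) + 1/2 * exp (3 * x\<^sup>2) * Erfc (5 * x / (2 * sqrt 2))"

end

theory Submission imports Defs "HOL-Probability.Probability" "HOL-Real_Asymp.Real_Asymp" begin

definition Gt :: "real \<Rightarrow> real" where
  "Gt t = (LBINT v:{t..}. exp (- v\<^sup>2 / 2))"

lemma e_int: "integrable lborel (\<lambda>v::real. exp (- v\<^sup>2 / 2))"
proof -
  have "integrable lborel (\<lambda>x. sqrt (2*pi) * std_normal_density x)"
    by (intro integrable_mult_right) simp
  then show ?thesis by (simp add: std_normal_density_def)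
qed

lemma e_sint: "set_integrable lborel A (\<lambda>v::real. exp (- v\<^sup>2 / 2))" if "A \<in> sets borel"
  using e_int that unfolding set_integrable_def
  by (intro integrable_mult_indicator) auto

lemma Gt_split: "a \<le> b \<Longrightarrow> Gt a = (LBINT v=a..b. exp (- v\<^sup>2 / 2)) + Gt b"
proof -
  assume ab: "a \<le> b"
  have "{a..} = {a..<b} \<union> {b..}" using ab by auto
  then have "Gt a = (LBINT v:{a..<b} \<union> {b..}. exp (- v\<^sup>2 / 2))" by (simp add: Gt_def)
  also have "\<dots> = (LBINT v:{a..<b}. exp (- v\<^sup>2 / 2)) + Gt b"
    unfolding Gt_def using e_sint[of "{a..<b}"] e_sint[of "{b..}"] by (intro set_integral_Un) auto
  finally show ?thesis using ab by (simp add: interval_integral_Ico)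
qed

lemma Gt_deriv: "(Gt has_real_derivative (- exp (- t\<^sup>2 / 2))) (at t)"
proof -
  let ?a = "t - 1" and ?b = "t + 1"
  have "((\<lambda>u. LBINT y=?a..u. exp (- y\<^sup>2 / 2)) has_vector_derivative (exp (- t\<^sup>2 / 2))) (at t within {?a..?b})"
    by (rule interval_integral_FTC2) (auto intro!: continuous_intros)
  then have "((\<lambda>u. LBINT y=?a..u. exp (- y\<^sup>2 / 2)) has_vector_derivative (exp (- t\<^sup>2 / 2))) (at t within {?a<..<?b})"
    by (rule has_vector_derivative_within_subset) auto
  then have "((\<lambda>u. LBINT y=?a..u. exp (- y\<^sup>2 / 2)) has_vector_derivative (exp (- t\<^sup>2 / 2))) (at t)"
    by (subst (asm) has_vector_derivative_within_open) auto
  then have "((\<lambda>u. Gt ?a - (LBINT y=?a..u. exp (- y\<^sup>2 / 2))) has_real_derivative (- exp (- t\<^sup>2 / 2))) (at t)"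
    by (auto intro!: derivative_eq_intros simp: has_real_derivative_iff_has_vector_derivative)
  then show ?thesis
  proof (rule has_field_derivative_transform_within_open[where S="{?a<..}"])
    fix x assume "x \<in> {?a<..}"
    then show "Gt ?a - (LBINT y=?a..x. exp (- y\<^sup>2 / 2)) = Gt x"
      using Gt_split[of ?a x] by simp
  qed auto
qed

lemma Gt_lim: "(Gt \<longlongrightarrow> 0) at_top"
proof -
  have "((\<lambda>b. LBINT v:{0..b}. exp (- v\<^sup>2 / 2)) \<longlongrightarrow> Gt 0) at_top"
    unfolding Gt_def using e_sint[of "{0..}"] by (intro tendsto_set_lebesgue_integral_at_top) auto
  then have "((\<lambda>b. Gt 0 - (LBINT v:{0..b}. exp (- v\<^sup>2 / 2))) \<longlongrightarrow> Gt 0 - Gt 0) at_top"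
    by (intro tendsto_intros)
  then have "((\<lambda>b. Gt 0 - (LBINT v:{0..b}. exp (- v\<^sup>2 / 2))) \<longlongrightarrow> 0) at_top" by simp
  then show ?thesis
  proof (rule Lim_transform_eventually)
    show "\<forall>\<^sub>F x in at_top. Gt 0 - (LBINT v:{0..x}. exp (- v\<^sup>2 / 2)) = Gt x"
      using eventually_ge_at_top[of "0::real"]
      by eventually_elim (use Gt_split in \<open>auto simp: interval_integral_Icc\<close>)
  qed
qed

lemma Erfc_Gt: "Erfc y = sqrt 2 / sqrt pi * Gt (sqrt 2 * y)"
proof -
  have c: "1 / sqrt 2 \<noteq> (0::real)" by simp
  have "(LBINT v:{y..}. exp (- (v\<^sup>2))) = (\<integral>v. indicator {y..} v *\<^sub>R exp (- (v\<^sup>2)) \<partial>lborel)"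
    by (simp add: set_lebesgue_integral_def)
  also have "\<dots> = \<bar>1 / sqrt 2\<bar> *\<^sub>R (\<integral>x. indicator {y..} (0 + 1 / sqrt 2 * x) *\<^sub>R exp (- ((0 + 1 / sqrt 2 * x)\<^sup>2)) \<partial>lborel)"
    by (rule lborel_integral_real_affine[OF c])
  also have "(\<lambda>x. indicator {y..} (0 + 1 / sqrt 2 * x) *\<^sub>R exp (- ((0 + 1 / sqrt 2 * x)\<^sup>2)))
      = (\<lambda>x. indicator {sqrt 2 * y..} x *\<^sub>R exp (- x\<^sup>2 / 2) :: real)"
  proof
    fix x :: real
    have "(y \<le> x / sqrt 2) = (sqrt 2 * y \<le> x)"
      by (simp add: field_simps)
    moreover have "(x / sqrt 2)\<^sup>2 = x\<^sup>2 / 2" by (simp add: power_divide)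
    ultimately show "indicator {y..} (0 + 1 / sqrt 2 * x) *\<^sub>R exp (- ((0 + 1 / sqrt 2 * x)\<^sup>2))
      = (indicator {sqrt 2 * y..} x *\<^sub>R exp (- x\<^sup>2 / 2) :: real)"
      by (simp add: indicator_def)
  qed
  finally have "(LBINT v:{y..}. exp (- (v\<^sup>2))) = 1 / sqrt 2 * Gt (sqrt 2 * y)"
    by (simp add: Gt_def set_lebesgue_integral_def)
  moreover have "2 / sqrt 2 = sqrt (2::real)" by (rule real_div_sqrt) simp
  ultimately show ?thesis unfolding Erfc_def
  proof -
    assume h1: "(LBINT v:{y..}. exp (- v\<^sup>2)) = 1 / sqrt 2 * Gt (sqrt 2 * y)" and h2: "2 / sqrt 2 = sqrt (2::real)"
    have "2 / sqrt pi * (LBINT v:{y..}. exp (- v\<^sup>2)) = (2 / sqrt 2) / sqrt pi * Gt (sqrt 2 * y)"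
      by (simp add: h1)
    then show "2 / sqrt pi * (LBINT v:{y..}. exp (- v\<^sup>2)) = sqrt 2 / sqrt pi * Gt (sqrt 2 * y)"
      by (simp only: h2)
  qed
qed

lemma N_Gt: "N x = Gt (- x) / sqrt (2 * pi)"
proof -
  have c: "-1 \<noteq> (0::real)" by simp
  have "(LBINT v:{..x}. exp (- (v\<^sup>2) / 2)) = (\<integral>v. indicator {..x} v *\<^sub>R exp (- (v\<^sup>2) / 2) \<partial>lborel)"
    by (simp add: set_lebesgue_integral_def)
  also have "\<dots> = \<bar>-1\<bar> *\<^sub>R (\<integral>w. indicator {..x} (0 + -1 * w) *\<^sub>R exp (- ((0 + -1 * w)\<^sup>2) / 2) \<partial>lborel)"
    by (rule lborel_integral_real_affine[OF c])
  also have "(\<lambda>w. indicator {..x} (0 + -1 * w) *\<^sub>R exp (- ((0 + -1 * w)\<^sup>2) / 2))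
      = (\<lambda>w. indicator {-x..} w *\<^sub>R exp (- w\<^sup>2 / 2) :: real)"
    by (auto simp: indicator_def fun_eq_iff)
  finally have "(LBINT v:{..x}. exp (- (v\<^sup>2) / 2)) = Gt (- x)"
    by (simp add: Gt_def set_lebesgue_integral_def)
  then show ?thesis unfolding N_def by simp
qed

lemma Gt_deriv_chain[derivative_intros]:
  "(g has_real_derivative g') (at x within S) \<Longrightarrow>
   ((\<lambda>x. Gt (g x)) has_real_derivative (- exp (- (g x)\<^sup>2 / 2) * g')) (at x within S)"
  by (rule DERIV_chain2[OF Gt_deriv])

definition Lm :: "real \<Rightarrow> real" where
  "Lm s = Gt s - s * exp (- s\<^sup>2 / 2) / (1 + s\<^sup>2)"

lemma Lm_deriv: "(Lm has_real_derivative (- 2 * exp (- s\<^sup>2 / 2) / (1 + s\<^sup>2)\<^sup>2)) (at s)"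
proof -
  have pos: "1 + s\<^sup>2 \<noteq> 0" by (metis add_pos_nonneg zero_less_one zero_le_power2 less_irrefl)
  show ?thesis unfolding Lm_def[abs_def]
    apply (rule derivative_eq_intros refl | simp add: pos)+
    using pos apply (simp add: divide_simps power2_eq_square)
    apply (simp add: algebra_simps)
    done
qed

lemma Lm_lim: "(Lm \<longlongrightarrow> 0) at_top"
proof -
  have "((\<lambda>s::real. s * exp (- s\<^sup>2 / 2) / (1 + s\<^sup>2)) \<longlongrightarrow> 0) at_top"
    by real_asymp
  from tendsto_diff[OF Gt_lim this] show ?thesis unfolding Lm_def[abs_def] by simp
qed

lemma Lm_nonneg: "0 \<le> Lm t"
proof (rule tendsto_le[OF trivial_limit_at_top_linorder tendsto_const Lm_lim])
  show "\<forall>\<^sub>F s in at_top. Lm s \<le> Lm t"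
    using eventually_ge_at_top[of t]
  proof eventually_elim
    case (elim s)
    show ?case
    proof (rule deriv_nonpos_imp_antimono[OF _ _ elim])
      fix x show "(Lm has_real_derivative (- 2 * exp (- x\<^sup>2 / 2) / (1 + x\<^sup>2)\<^sup>2)) (at x)"
        by (rule Lm_deriv)
      show "- 2 * exp (- x\<^sup>2 / 2) / (1 + x\<^sup>2)\<^sup>2 \<le> 0"
        by (simp add: divide_nonpos_pos)
    qed
  qed
qed

lemma Mills: "t * exp (- t\<^sup>2 / 2) / (1 + t\<^sup>2) \<le> Gt t"
  using Lm_nonneg[of t] by (simp add: Lm_def)

definition Sf :: "real \<Rightarrow> real" where
  "Sf t = t * exp (t\<^sup>2 / 2) * Gt t"

lemma Sf_deriv: "(Sf has_real_derivative (exp (t\<^sup>2 / 2) * ((1 + t\<^sup>2) * Gt t - t * exp (- t\<^sup>2 / 2)))) (at t)"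
proof -
  have ee: "exp (t\<^sup>2 / 2) * exp (- t\<^sup>2 / 2) = 1" by (simp add: exp_minus field_simps)
  show ?thesis unfolding Sf_def[abs_def]
    apply (rule derivative_eq_intros refl | simp)+
    apply (simp add: algebra_simps power2_eq_square)
    done
qed

lemma Sf_mono: "0 \<le> a \<Longrightarrow> a \<le> b \<Longrightarrow> Sf a \<le> Sf b"
proof (rule deriv_nonneg_imp_mono[OF Sf_deriv])
  fix x assume "0 \<le> a" "x \<in> {a..b}"
  have p: "0 < 1 + x\<^sup>2" by (simp add: add_pos_nonneg)
  have "x * exp (- x\<^sup>2 / 2) \<le> (1 + x\<^sup>2) * Gt x"
    using Mills[of x] p by (simp add: divide_le_eq mult.commute)
  then show "0 \<le> exp (x\<^sup>2 / 2) * ((1 + x\<^sup>2) * Gt x - x * exp (- x\<^sup>2 / 2))"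
    by simp
qed

definition Pf :: "real \<Rightarrow> real" where
  "Pf u = 6 * u * exp (25 * u\<^sup>2 / 2) * Gt (5 * u) - 1"

lemma Pf_Sf: "Pf u = 6 / 5 * Sf (5 * u) - 1"
  by (simp add: Pf_def Sf_def power_mult_distrib)

lemma Pf_mono: "0 \<le> a \<Longrightarrow> a \<le> b \<Longrightarrow> Pf a \<le> Pf b"
  using Sf_mono[of "5*a" "5*b"] by (simp add: Pf_Sf)

lemma Pf_0: "Pf 0 = -1" by (simp add: Pf_def)

lemma Pf_u0: "0 \<le> Pf (1 / sqrt 5)"
proof -
  have m: "sqrt 5 * exp (- 5 / 2) / 6 \<le> Gt (sqrt 5)"
    using Mills[of "sqrt 5"] by simp
  have "Sf (sqrt 5) = sqrt 5 * exp (5 / 2) * Gt (sqrt 5)" by (simp add: Sf_def)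
  also have "\<dots> \<ge> sqrt 5 * exp (5 / 2) * (sqrt 5 * exp (- 5 / 2) / 6)"
    using m by (intro mult_left_mono) auto
  also have "sqrt 5 * exp (5 / 2) * (sqrt 5 * exp (- 5 / 2) / 6) = (5 / 6 :: real)"
    by (simp add: exp_minus field_simps)
  finally have "5 / 6 \<le> Sf (sqrt 5)" .
  moreover have "5 * (1 / sqrt 5) = sqrt (5::real)"
    by (simp add: real_div_sqrt)
  ultimately show ?thesis by (simp add: Pf_Sf)
qed

lemma Pf_cont: "continuous_on A Pf"
proof -
  have "\<And>x. (Pf has_real_derivative (6 / 5 * (exp ((5*x)\<^sup>2 / 2) * ((1 + (5*x)\<^sup>2) * Gt (5*x) - (5*x) * exp (- (5*x)\<^sup>2 / 2))) * 5)) (at x)"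
    unfolding Pf_Sf[abs_def]
    by (rule derivative_eq_intros DERIV_chain2[OF Sf_deriv] refl | simp)+
  then show ?thesis
    by (meson DERIV_isCont continuous_at_imp_continuous_on)
qed

definition Ff :: "real \<Rightarrow> real" where
  "Ff u = Gt (- u) + exp (12 * u\<^sup>2) * Gt (5 * u)"

lemma Ff_deriv: "(Ff has_real_derivative (4 * exp (- u\<^sup>2 / 2) * Pf u)) (at u)"
proof -
  have e1: "exp (12 * u\<^sup>2) * exp (- (5 * u)\<^sup>2 / 2) = exp (- u\<^sup>2 / 2)"
    by (simp add: exp_add[symmetric] power_mult_distrib)
  have e2: "exp (- u\<^sup>2 / 2) * exp (25 * u\<^sup>2 / 2) = exp (12 * u\<^sup>2)"
    by (simp add: exp_add[symmetric])
  have "(Ff has_real_derivative (exp (- u\<^sup>2 / 2) + 24 * u * exp (12 * u\<^sup>2) * Gt (5 * u) - 5 * (exp (12 * u\<^sup>2) * exp (- (5 * u)\<^sup>2 / 2)))) (at u)"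
    unfolding Ff_def[abs_def]
    by (rule derivative_eq_intros refl | simp)+
  moreover have "exp (- u\<^sup>2 / 2) + 24 * u * exp (12 * u\<^sup>2) * Gt (5 * u) - 5 * (exp (12 * u\<^sup>2) * exp (- (5 * u)\<^sup>2 / 2))
     = 4 * exp (- u\<^sup>2 / 2) * Pf u"
    unfolding e1 Pf_def by (simp add: algebra_simps e2[symmetric])
  ultimately show ?thesis by simp
qed

definition Kf :: "real \<Rightarrow> real" where
  "Kf v = Gt (- v) + exp (- v\<^sup>2 / 2) / (6 * v)"

lemma Kf_deriv: "v \<noteq> 0 \<Longrightarrow> (Kf has_real_derivative (exp (- v\<^sup>2 / 2) * (5 / 6 - 1 / (6 * v\<^sup>2)))) (at v)"
  unfolding Kf_def[abs_def]
  apply (rule derivative_eq_intros refl | simp)+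
  apply (simp add: field_simps power2_eq_square)
  done

lemma Kf_min: assumes v: "0 < v" shows "Kf (1 / sqrt 5) \<le> Kf v"
proof (cases "v \<le> 1 / sqrt 5")
  case True
  show ?thesis
  proof (rule deriv_nonpos_imp_antimono[OF _ _ True])
    fix x assume x: "x \<in> {v..1 / sqrt 5}"
    then have x0: "0 < x" using v by auto
    show "(Kf has_real_derivative (exp (- x\<^sup>2 / 2) * (5 / 6 - 1 / (6 * x\<^sup>2)))) (at x)"
      using x0 by (intro Kf_deriv) auto
    have "x\<^sup>2 \<le> (1 / sqrt 5)\<^sup>2" using x x0 by (intro power_mono) auto
    then have "x\<^sup>2 \<le> 1 / 5" by (simp add: power_divide)
    then have "5 / 6 \<le> 1 / (6 * x\<^sup>2)" using x0 by (simp add: field_simps)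
    then show "exp (- x\<^sup>2 / 2) * (5 / 6 - 1 / (6 * x\<^sup>2)) \<le> 0"
      by (simp add: mult_nonneg_nonpos)
  qed
next
  case False
  show ?thesis
  proof (rule deriv_nonneg_imp_mono[where g=Kf and a="1 / sqrt 5" and b=v])
    show "1 / sqrt 5 \<le> v" using False by simp
    fix x assume x: "x \<in> {1 / sqrt 5..v}"
    have p: "0 < 1 / sqrt (5::real)" by simp
    then have x0: "0 < x" using x by (meson atLeastAtMost_iff less_le_trans)
    show "(Kf has_real_derivative (exp (- x\<^sup>2 / 2) * (5 / 6 - 1 / (6 * x\<^sup>2)))) (at x)"
      using x0 by (intro Kf_deriv) auto
    have "(1 / sqrt 5)\<^sup>2 \<le> x\<^sup>2" using x p by (intro power_mono) auto
    then have "1 / 5 \<le> x\<^sup>2" by (simp add: power_divide)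
    then have "1 / (6 * x\<^sup>2) \<le> 5 / 6" using x0 by (simp add: field_simps)
    then show "0 \<le> exp (- x\<^sup>2 / 2) * (5 / 6 - 1 / (6 * x\<^sup>2))"
      by simp
  qed
qed

lemma Ff_ge_Kf: assumes u: "0 < u" and P: "0 \<le> Pf u" shows "Kf u \<le> Ff u"
proof -
  have e2: "exp (- u\<^sup>2 / 2) * exp (25 * u\<^sup>2 / 2) = exp (12 * u\<^sup>2)"
    by (simp add: exp_add[symmetric])
  have "1 \<le> 6 * u * exp (25 * u\<^sup>2 / 2) * Gt (5 * u)" using P by (simp add: Pf_def)
  then have "exp (- u\<^sup>2 / 2) / (6 * u) * 1 \<le> exp (- u\<^sup>2 / 2) / (6 * u) * (6 * u * exp (25 * u\<^sup>2 / 2) * Gt (5 * u))"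
    using u by (intro mult_left_mono) auto
  also have "\<dots> = exp (12 * u\<^sup>2) * Gt (5 * u)"
    using u by (simp add: e2[symmetric])
  finally show ?thesis by (simp add: Kf_def Ff_def)
qed

lemma Ff_main: assumes u: "0 \<le> u" shows "Kf (1 / sqrt 5) \<le> Ff u"
proof (cases "0 \<le> Pf u")
  case True
  then have "u \<noteq> 0" using Pf_0 by auto
  then have "0 < u" using u by simp
  then show ?thesis using Kf_min Ff_ge_Kf True by (meson order_trans)
next
  case False
  have "u < 1 / sqrt 5"
  proof (rule ccontr)
    assume "\<not> ?thesis"
    then have "Pf (1 / sqrt 5) \<le> Pf u" by (intro Pf_mono) auto
    then show False using False Pf_u0 by simp
  qed
  then obtain w where w: "u \<le> w" "w \<le> 1 / sqrt 5" "Pf w = 0"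
    using IVT'[of Pf u 0 "1 / sqrt 5"] False Pf_u0 Pf_cont by auto
  have "w \<noteq> 0" using w Pf_0 by auto
  then have w0: "0 < w" using w u by simp
  have "Ff w \<le> Ff u"
  proof (rule deriv_nonpos_imp_antimono[OF _ _ w(1)])
    fix x assume x: "x \<in> {u..w}"
    show "(Ff has_real_derivative (4 * exp (- x\<^sup>2 / 2) * Pf x)) (at x)" by (rule Ff_deriv)
    have "Pf x \<le> Pf w" using x u by (intro Pf_mono) auto
    then show "4 * exp (- x\<^sup>2 / 2) * Pf x \<le> 0" using w
      by (simp add: mult_nonneg_nonpos)
  qed
  moreover have "Kf w \<le> Ff w" using Ff_ge_Kf w0 w by simp
  moreover have "Kf (1 / sqrt 5) \<le> Kf w" using Kf_min w0 by simp
  ultimately show ?thesis by linarith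
qed

theorem lemma3p1:
  fixes x :: real
  assumes "x \<ge> 0"
  shows "f x \<ge> N (1 / sqrt 5) + 1/12 * sqrt (10 / pi) * exp (- 1/10)"
proof -
  let ?c = "sqrt (2 * pi)"
  have c: "1 / 2 * (sqrt 2 / sqrt pi) = 1 / ?c"
  proof -
    have "sqrt 2 * sqrt 2 = (2::real)" by simp
    then show ?thesis by (simp add: real_sqrt_mult field_simps)
  qed
  have a1: "sqrt 2 * (- x / (2 * sqrt 2)) = - (x / 2)" by simp
  have a2: "sqrt 2 * (5 * x / (2 * sqrt 2)) = 5 * (x / 2)" by simp
  have a3: "exp (3 * x\<^sup>2) = exp (12 * (x / 2)\<^sup>2)" by (simp add: power_divide)
  have fx: "f x = Ff (x / 2) / ?c"
    unfolding f_def Erfc_Gt a1 a2 a3 Ff_def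
    using c by (simp add: field_simps)
  have k1: "exp (- (1 / sqrt 5)\<^sup>2 / 2) = exp (- 1 / (10::real))"
    by (simp add: power_divide)
  have k2: "1 / (6 * (1 / sqrt 5)) = sqrt 5 / (6::real)" by simp
  have k3: "1/12 * sqrt (10 / pi) = sqrt 5 / 6 / ?c"
  proof -
    have e: "sqrt (10 / pi) = sqrt 5 * sqrt 2 / sqrt pi"
      by (simp add: real_sqrt_divide real_sqrt_mult[symmetric])
    have t: "sqrt 2 * sqrt 2 = (2::real)" by simp
    have "1/12 * (sqrt 5 * sqrt 2 / sqrt pi) = sqrt 5 * (sqrt 2 * sqrt 2) / (12 * sqrt 2 * sqrt pi)"
      by (simp add: field_simps)
    also have "\<dots> = sqrt 5 / 6 / ?c" unfolding t by (simp add: real_sqrt_mult field_simps)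
    finally show ?thesis unfolding e .
  qed
  have rhs: "N (1 / sqrt 5) + 1/12 * sqrt (10 / pi) * exp (- 1/10) = Kf (1 / sqrt 5) / ?c"
    unfolding N_Gt Kf_def k1 k3
    by (simp add: field_simps)
  have "Kf (1 / sqrt 5) / ?c \<le> Ff (x / 2) / ?c"
    using Ff_main[of "x / 2"] assms by (intro divide_right_mono) auto
  then show ?thesis using fx rhs by simp
qed

end
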